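(* Let $n\ge3$ and $x^\Lambda\partial_k\in\mathcal{B}$. Then $\mathrm{WD}(x^\Lambda\partial_k)\ge n-k$, with equality if and only if $x^\Lambda\partial_k=x_1^{\lambda_1}\partial_k$. Moreover, if $\mathrm{lev}_i(x^\Lambda\partial_k)\le i$ for some integer $i\ge-1$, then $\mathrm{WD}(x^\Lambda\partial_k)\le n-1$, with equality if and only if $x^\Lambda\partial_k=\partial_1$.
   Context: Fix an integer $n\ge 3$. A partition is a sequence $\Lambda=(\lambda_j)_{j\ge1}$ of non-negative integers with finite support; $\mathrm{wt}(\Lambda)=\sum_j j\lambda_j$; $\mathrm{Part}(k)$ is the set of partitions with $\lambda_j=0$ for $j>k$. Write $x^\Lambda=\prod_j x_j^{\lambda_j}$, $\deg(x^\Lambda)=\sum_j\lambda_j$. $\mathcal{B}=\{x^\Lambda\partial_k : 1\le k\le n,\ \Lambda\in\mathrm{Part}(k-1)\}$. For an integer $i\ge-1$, let $r_i\in\{1,\dots,n-1\}$ with $i\equiv r_i\pmod{n-1}$ and $h_i=\lfloor (i-1)/(n-1)\rfloor+1$. Define $\mathrm{WD}(x^\Lambda\partial_k)=\mathrm{wt}(\Lambda)-\deg(x^\Lambda)+n-k$ and $\mathrm{lev}_i(x^\Lambda\partial_k)=h_i\,\mathrm{WD}(x^\Lambda\partial_k)+\deg(x^\Lambda)-1$. *)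

theory Defs
  imports Main
begin

text \<open>A partition is a sequence (lambda_j) indexed by j >= 1 of naturals with finite support.
  We represent it as a function nat => nat and, by convention, require the (unused) entry at
  index 0 to be 0.\<close>

definition is_partition :: "(nat \<Rightarrow> nat) \<Rightarrow> bool" where
  "is_partition L \<longleftrightarrow> L 0 = 0 \<and> finite {j. L j \<noteq> 0}"

definition Part :: "nat \<Rightarrow> (nat \<Rightarrow> nat) set" where
  "Part k = {L. is_partition L \<and> (\<forall>j>k. L j = 0)}"

definition wt :: "(nat \<Rightarrow> nat) \<Rightarrow> nat" where
  "wt L = (\<Sum>j\<in>{j. L j \<noteq> 0}. j * L j)"

definition mdeg :: "(nat \<Rightarrow> nat) \<Rightarrow> nat" where
  "mdeg L = (\<Sum>j\<in>{j. L j \<noteq> 0}. L j)"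

text \<open>The monomial vector field x^L d_k is represented by the pair (L, k).\<close>

definition inB :: "nat \<Rightarrow> (nat \<Rightarrow> nat) \<Rightarrow> nat \<Rightarrow> bool" where
  "inB n L k \<longleftrightarrow> 1 \<le> k \<and> k \<le> n \<and> L \<in> Part (k - 1)"

definition WD :: "nat \<Rightarrow> (nat \<Rightarrow> nat) \<Rightarrow> nat \<Rightarrow> int" where
  "WD n L k = int (wt L) - int (mdeg L) + int n - int k"

definition hh :: "nat \<Rightarrow> int \<Rightarrow> int" where
  "hh n i = (i - 1) div (int n - 1) + 1"

definition lev :: "nat \<Rightarrow> int \<Rightarrow> (nat \<Rightarrow> nat) \<Rightarrow> nat \<Rightarrow> int" where
  "lev n i L k = hh n i * WD n L k + int (mdeg L) - 1"

end

theory Submission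
  imports Defs
begin

lemma wt_ge:
  assumes "is_partition L"
  shows "mdeg L \<le> wt L \<and> (mdeg L = wt L \<longleftrightarrow> (\<forall>j\<ge>2. L j = 0))"
proof -
  let ?S = "{j. L j \<noteq> 0}"
  have fin: "finite ?S" and L0: "L 0 = 0" using assms by (auto simp: is_partition_def)
  have pt: "\<And>j. j \<in> ?S \<Longrightarrow> L j \<le> j * L j"
  proof -
    fix j assume "j \<in> ?S"
    then have Lj: "L j \<noteq> 0" by simp
    have "j \<noteq> 0"
    proof
      assume "j = 0" with L0 Lj show False by simp
    qed
    then show "L j \<le> j * L j" by (cases j) auto
  qed
  have le: "mdeg L \<le> wt L" unfolding mdeg_def wt_def by (rule sum_mono) (rule pt)
  have diff: "wt L - mdeg L = (\<Sum>j\<in>?S. j * L j - L j)"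
    unfolding mdeg_def wt_def by (rule sum_subtractf_nat[symmetric]) (rule pt)
  have "(wt L - mdeg L = 0) \<longleftrightarrow> (\<forall>j\<in>?S. j * L j - L j = 0)"
    using diff fin by simp
  also have "\<dots> \<longleftrightarrow> (\<forall>j\<ge>2. L j = 0)"
  proof
    assume h: "\<forall>j\<in>?S. j * L j - L j = 0"
    show "\<forall>j\<ge>2. L j = 0"
    proof (intro allI impI)
      fix j :: nat assume j: "j \<ge> 2"
      show "L j = 0"
      proof (rule ccontr)
        assume "L j \<noteq> 0"
        then have "j * L j - L j = 0" using h by auto
        moreover have "j * L j \<ge> 2 * L j" using j by simp
        ultimately show False using \<open>L j \<noteq> 0\<close> by linarith
      qed
    qed
  next
    assume h: "\<forall>j\<ge>2. L j = 0"
    show "\<forall>j\<in>?S. j * L j - L j = 0"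
    proof
      fix j assume "j \<in> ?S"
      then have "j < 2" using h by (meson mem_Collect_eq not_less)
      then show "j * L j - L j = 0" by (cases j) auto
    qed
  qed
  finally have X: "(wt L - mdeg L = 0) \<longleftrightarrow> (\<forall>j\<ge>2. L j = 0)" .
  have "(wt L - mdeg L = 0) \<longleftrightarrow> mdeg L = wt L" using le by auto
  then show ?thesis using le X by simp
qed

lemma wt_le:
  assumes "L \<in> Part m"
  shows "wt L \<le> m * mdeg L"
proof -
  have pt: "\<And>j. j \<in> {j. L j \<noteq> 0} \<Longrightarrow> j * L j \<le> m * L j"
  proof -
    fix j assume "j \<in> {j. L j \<noteq> 0}"
    then have "j \<le> m" using assms unfolding Part_def using not_less by blast
    then show "j * L j \<le> m * L j" by (rule mult_le_mono1)
  qed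
  have "wt L \<le> (\<Sum>j\<in>{j. L j \<noteq> 0}. m * L j)" unfolding wt_def by (rule sum_mono) (rule pt)
  also have "\<dots> = m * mdeg L" unfolding mdeg_def by (simp add: sum_distrib_left)
  finally show ?thesis .
qed

lemma mdeg0:
  assumes "is_partition L"
  shows "mdeg L = 0 \<longleftrightarrow> (\<forall>j. L j = 0)"
proof -
  have fin: "finite {j. L j \<noteq> 0}" using assms by (auto simp: is_partition_def)
  show ?thesis unfolding mdeg_def using fin by auto
qed

lemma negdiv: "(2::int) \<le> b \<Longrightarrow> (- b) div b = -1"
  by (simp add: zdiv_zminus1_eq_if)

theorem lemma2p2:
  fixes n k :: nat and L :: "nat \<Rightarrow> nat"
  assumes "n \<ge> 3" and "inB n L k"
  shows "WD n L k \<ge> int n - int k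
    \<and> (WD n L k = int n - int k \<longleftrightarrow> (\<forall>j\<ge>2. L j = 0))
    \<and> (\<forall>i::int. i \<ge> -1 \<and> lev n i L k \<le> i \<longrightarrow>
          WD n L k \<le> int n - 1
          \<and> (WD n L k = int n - 1 \<longleftrightarrow> (k = 1 \<and> (\<forall>j. L j = 0))))"
proof -
  have k: "1 \<le> k" "k \<le> n" and P: "L \<in> Part (k - 1)" using assms(2) by (auto simp: inB_def)
  have ip: "is_partition L" using P by (simp add: Part_def)
  note A = wt_ge[OF ip]
  have B: "wt L \<le> (k - 1) * mdeg L" by (rule wt_le[OF P])
  note C = mdeg0[OF ip]
  have WDe: "WD n L k = int (wt L) - int (mdeg L) + int n - int k" by (simp add: WD_def)
  have part1: "WD n L k \<ge> int n - int k
    \<and> (WD n L k = int n - int k \<longleftrightarrow> (\<forall>j\<ge>2. L j = 0))"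
    using A WDe by auto
  have key: "mdeg L \<le> 1 \<Longrightarrow> WD n L k \<le> int n - 1
          \<and> (WD n L k = int n - 1 \<longleftrightarrow> (k = 1 \<and> (\<forall>j. L j = 0)))"
  proof -
    assume d: "mdeg L \<le> 1"
    show ?thesis
    proof (cases "mdeg L = 0")
      case True
      then have "\<forall>j. L j = 0" using C by simp
      then have "wt L = 0" using A True by simp
      then show ?thesis using True C WDe k by auto
    next
      case False
      then have "mdeg L = 1" using d by simp
      then have "int (wt L) \<le> int k - 1" using B k by simp
      then show ?thesis using \<open>mdeg L = 1\<close> C WDe k by auto
    qed
  qed
  have part2: "\<forall>i::int. i \<ge> -1 \<and> lev n i L k \<le> i \<longrightarrow>
          WD n L k \<le> int n - 1
          \<and> (WD n L k = int n - 1 \<longleftrightarrow> (k = 1 \<and> (\<forall>j. L j = 0)))"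
  proof (intro allI impI)
    fix i :: int assume h: "i \<ge> -1 \<and> lev n i L k \<le> i"
    have lv: "hh n i * WD n L k + int (mdeg L) - 1 \<le> i" using h by (simp add: lev_def)
    have n1: "int n - 1 \<ge> 2" using assms(1) by simp
    have "mdeg L \<le> 1 \<or> WD n L k < int n - 1"
    proof (cases "i \<le> 0")
      case True
      have q1: "(i - 1) div (int n - 1) < 0" using True n1 by (simp add: pos_imp_zdiv_neg_iff)
      have "(- (int n - 1)) div (int n - 1) \<le> (i - 1) div (int n - 1)"
        using True h n1 by (intro zdiv_mono1) auto
      moreover have "(- (int n - 1)) div (int n - 1) = -1" using n1 by (rule negdiv)
      ultimately have "hh n i = 0" using q1 by (simp add: hh_def)
      then show ?thesis using lv True by simp
    next
      case False
      define m where "m = int n - 1"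
      define q where "q = (i - 1) div m"
      define r where "r = (i - 1) mod m"
      have m2: "m \<ge> 2" using n1 m_def by simp
      have dm: "i - 1 = q * m + r" unfolding q_def r_def by simp
      have r: "r < m" unfolding r_def using m2 by simp
      have q0: "q \<ge> 0" unfolding q_def using False m2 by (simp add: pos_imp_zdiv_nonneg_iff)
      have hq: "hh n i = q + 1" by (simp add: hh_def q_def m_def)
      have im: "i \<le> (q + 1) * m" using dm r by (simp add: algebra_simps)
      show ?thesis
      proof (rule ccontr)
        assume "\<not> ?thesis"
        then have d2: "mdeg L \<ge> 2" and W: "WD n L k \<ge> m" by (auto simp: m_def)
        have "(q + 1) * m \<le> (q + 1) * WD n L k" using W q0 by (intro mult_left_mono) auto
        then show False using lv[unfolded hq] im d2 by linarith
      qed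
    qed
    then show "WD n L k \<le> int n - 1
          \<and> (WD n L k = int n - 1 \<longleftrightarrow> (k = 1 \<and> (\<forall>j. L j = 0)))"
    proof (elim disjE)
      assume "mdeg L \<le> 1" then show ?thesis by (rule key)
    next
      assume w: "WD n L k < int n - 1"
      have "\<not> (k = 1 \<and> (\<forall>j. L j = 0))"
      proof
        assume kk: "k = 1 \<and> (\<forall>j. L j = 0)"
        then have "mdeg L = 0" using C by simp
        moreover then have "wt L = 0" using A kk by simp
        ultimately show False using w WDe kk by simp
      qed
      then show ?thesis using w by simp
    qed
  qed
  show ?thesis using part1 part2 by blast
qed

end
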